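(* Let $f$ be a tournament solution that is TS-Condorcet consistent. Then $f$-Approval is monotonic if and only if $f$ satisfies both the TS-exclusive monotonicity criterion and the TS-exclusive negative monotonicity (ENM) criterion.
   Context: A tournament $T=(V(T),\succ)$ is a finite set of candidates with an asymmetric and complete binary relation $\succ$. $N^+_T(c)=\{b: c\succ b\}$ is the set of outneighbors of $c$; $T[B]$ is the subtournament induced by $B\subseteq V(T)$. The source (Condorcet winner) of $T$ is a candidate $a$ with $a\succ b$ for all $b\neq a$. A tournament solution $f$ maps every tournament $T$ to a nonempty subset $f(T)\subseteq V(T)$. An election $\mathcal{E}=(\mathcal{C},\mathcal{T})$ consists of a finite candidate set $\mathcal{C}$ and a finite list $\mathcal{T}$ of votes, each a tournament on $\mathcal{C}$. $f$-Approval gives each candidate $c$ the score $|\{T\in\mathcal{T}: c\in f(T)\}|$ (with multiplicity) and its winners are the candidates of highest score. Say a pair of tournaments $T=(\mathcal{C},\succ)$, $T'=(\mathcal{C},\succ')$ is a $c$-improvement (for $c\in\mathcal{C}$) if $T[\mathcal{C}\setminus\{c\}]=T'[\mathcal{C}\setminus\{c\}]$ and $N^+_T(c)\subseteq N^+_{T'}(c)$. - $f$ is TS-Condorcet consistent if $f(T)=\{w\}$ whenever $T$ has a source $w$. - $f$ is TS-exclusive monotonic if for every $c$-improvement $(T,T')$ with $c\in f(T)$, we have $c\in f(T')$ and $f(T')\subseteq f(T)$. - $f$ satisfies TS-ENM if for every $c$-improvement $(T,T')$ with $c\notin f(T)$, $f(T')\not\subseteq f(T)$ implies $c\in f(T')$.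 - A voting correspondence $\varphi$ is monotonic if for every two elections $\mathcal{E}=(\mathcal{C},(T_1,\dots,T_n))$, $\mathcal{E}'=(\mathcal{C},(T_1',\dots,T_n'))$ and every $c\in\varphi(\mathcal{E})$ such that $(T_i,T_i')$ is a $c$-improvement for every $i$, it holds that $c\in\varphi(\mathcal{E}')$. *)

theory Defs
  imports Main
begin

text \<open>A tournament on the candidate set C: an asymmetric, complete relation on a finite
  nonempty set C (pairs (x,y) in R mean x beats y); R contains only pairs of candidates.\<close>
definition tournament :: "'a set \<Rightarrow> 'a rel \<Rightarrow> bool" where
  "tournament C R \<longleftrightarrow> finite C \<and> C \<noteq> {} \<and> R \<subseteq> C \<times> C \<and>
     (\<forall>x y. (x, y) \<in> R \<longrightarrow> (y, x) \<notin> R) \<and>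
     (\<forall>x\<in>C. \<forall>y\<in>C. x \<noteq> y \<longrightarrow> (x, y) \<in> R \<or> (y, x) \<in> R)"

definition outnbrs :: "'a rel \<Rightarrow> 'a \<Rightarrow> 'a set" where
  "outnbrs R c = {b. (c, b) \<in> R}"

definition restr :: "'a rel \<Rightarrow> 'a set \<Rightarrow> 'a rel" where
  "restr R B = R \<inter> (B \<times> B)"

definition is_source :: "'a set \<Rightarrow> 'a rel \<Rightarrow> 'a \<Rightarrow> bool" where
  "is_source C R w \<longleftrightarrow> w \<in> C \<and> (\<forall>b\<in>C. b \<noteq> w \<longrightarrow> (w, b) \<in> R)"

definition tournament_solution :: "('a set \<Rightarrow> 'a rel \<Rightarrow> 'a set) \<Rightarrow> bool" where
  "tournament_solution f \<longleftrightarrow>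
     (\<forall>C R. tournament C R \<longrightarrow> f C R \<noteq> {} \<and> f C R \<subseteq> C)"

definition c_improvement :: "'a set \<Rightarrow> 'a \<Rightarrow> 'a rel \<Rightarrow> 'a rel \<Rightarrow> bool" where
  "c_improvement C c R R' \<longleftrightarrow> tournament C R \<and> tournament C R' \<and> c \<in> C \<and>
     restr R (C - {c}) = restr R' (C - {c}) \<and> outnbrs R c \<subseteq> outnbrs R' c"

definition ts_condorcet :: "('a set \<Rightarrow> 'a rel \<Rightarrow> 'a set) \<Rightarrow> bool" where
  "ts_condorcet f \<longleftrightarrow>
     (\<forall>C R w. tournament C R \<longrightarrow> is_source C R w \<longrightarrow> f C R = {w})"

definition ts_exclusive_monotonic :: "('a set \<Rightarrow> 'a rel \<Rightarrow> 'a set) \<Rightarrow> bool" where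
  "ts_exclusive_monotonic f \<longleftrightarrow>
     (\<forall>C c R R'. c_improvement C c R R' \<longrightarrow> c \<in> f C R \<longrightarrow>
        c \<in> f C R' \<and> f C R' \<subseteq> f C R)"

definition ts_enm :: "('a set \<Rightarrow> 'a rel \<Rightarrow> 'a set) \<Rightarrow> bool" where
  "ts_enm f \<longleftrightarrow>
     (\<forall>C c R R'. c_improvement C c R R' \<longrightarrow> c \<notin> f C R \<longrightarrow>
        \<not> (f C R' \<subseteq> f C R) \<longrightarrow> c \<in> f C R')"

definition election :: "'a set \<Rightarrow> 'a rel list \<Rightarrow> bool" where
  "election C Ts \<longleftrightarrow> finite C \<and> C \<noteq> {} \<and> (\<forall>T\<in>set Ts. tournament C T)"

definition approval_score ::
  "('a set \<Rightarrow> 'a rel \<Rightarrow> 'a set) \<Rightarrow> 'a set \<Rightarrow> 'a rel list \<Rightarrow> 'a \<Rightarrow> nat" where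
  "approval_score f C Ts c = length (filter (\<lambda>T. c \<in> f C T) Ts)"

definition approval_winners ::
  "('a set \<Rightarrow> 'a rel \<Rightarrow> 'a set) \<Rightarrow> 'a set \<Rightarrow> 'a rel list \<Rightarrow> 'a set" where
  "approval_winners f C Ts =
     {c \<in> C. \<forall>d\<in>C. approval_score f C Ts d \<le> approval_score f C Ts c}"

definition approval_monotonic :: "('a set \<Rightarrow> 'a rel \<Rightarrow> 'a set) \<Rightarrow> bool" where
  "approval_monotonic f \<longleftrightarrow>
     (\<forall>C Ts Ts' c. election C Ts \<longrightarrow> election C Ts' \<longrightarrow> length Ts = length Ts' \<longrightarrow>
        c \<in> approval_winners f C Ts \<longrightarrow>
        (\<forall>i < length Ts. c_improvement C c (Ts ! i) (Ts' ! i)) \<longrightarrow>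
        c \<in> approval_winners f C Ts')"

end

theory Submission
  imports Defs
begin

definition src_tour :: "'a \<Rightarrow> 'a set \<Rightarrow> 'a rel \<Rightarrow> 'a rel" where
  "src_tour d C R = {(x,y). (x,y)\<in>R \<and> x\<noteq>d \<and> y\<noteq>d} \<union> {(d,y)| y. y\<in>C \<and> y\<noteq>d}"

lemma src_tour:
  assumes "tournament C R" "d \<in> C"
  shows "tournament C (src_tour d C R)" "is_source C (src_tour d C R) d"
  using assms unfolding tournament_def src_tour_def is_source_def by blast+

lemma self_imp:
  assumes "tournament C R" "c \<in> C"
  shows "c_improvement C c R R"
  using assms unfolding c_improvement_def by auto

lemma sc_cons: "approval_score f C (T#Ts) x = (if x \<in> f C T then 1 else 0) + approval_score f C Ts x"
  "approval_score f C [] x = 0"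
  by (simp_all add: approval_score_def)

lemma score_ineq:
  assumes "length Ts = length Ts'" "\<forall>i<length Ts. P (Ts!i) (Ts'!i)"
    and "\<And>T T'. P T T' \<Longrightarrow> (if d \<in> f C T' then 1 else 0) + (if c \<in> f C T then 1 else 0)
          \<le> (if d \<in> f C T then 1 else 0) + (if c \<in> f C T' then (1::nat) else 0)"
  shows "approval_score f C Ts' d + approval_score f C Ts c
           \<le> approval_score f C Ts d + approval_score f C Ts' c"
  using assms(1,2)
proof (induction Ts Ts' rule: list_induct2)
  case Nil
  show ?case by (simp add: approval_score_def)
next
  case (Cons x xs y ys)
  have Pxy: "P x y" using Cons.prems by fastforce
  have "\<forall>i<length xs. P (xs!i) (ys!i)"
  proof (intro allI impI)
    fix i assume "i < length xs"
    then show "P (xs!i) (ys!i)" using Cons.prems[rule_format, of "Suc i"] by simp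
  qed
  then have IH: "approval_score f C ys d + approval_score f C xs c
           \<le> approval_score f C xs d + approval_score f C ys c" using Cons.IH by blast
  show ?case using assms(3)[OF Pxy] IH
    unfolding sc_cons by (simp split: if_splits)
qed

lemma pointwise:
  assumes "ts_exclusive_monotonic f" "ts_enm f" "c_improvement C c T T'"
  shows "(if d \<in> f C T' then 1 else 0) + (if c \<in> f C T then 1 else 0)
          \<le> (if d \<in> f C T then 1 else 0) + (if c \<in> f C T' then (1::nat) else 0)"
proof (cases "c \<in> f C T")
  case True
  then have "c \<in> f C T'" "f C T' \<subseteq> f C T"
    using assms(1,3) unfolding ts_exclusive_monotonic_def by blast+
  then show ?thesis using True by auto
next
  case False
  show ?thesis
  proof (cases "f C T' \<subseteq> f C T")
    case True
    then show ?thesis using False by auto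
  next
    case F2: False
    then have "c \<in> f C T'" using False assms(2,3) unfolding ts_enm_def by blast
    then show ?thesis using False by auto
  qed
qed

lemma am_use:
  assumes "approval_monotonic f" "election C Ts" "election C Ts'" "length Ts = length Ts'"
    "c \<in> approval_winners f C Ts" "\<forall>i < length Ts. c_improvement C c (Ts ! i) (Ts' ! i)"
  shows "c \<in> approval_winners f C Ts'"
  using assms unfolding approval_monotonic_def by blast

theorem theorem2:
  fixes f :: "'a set \<Rightarrow> 'a rel \<Rightarrow> 'a set"
  assumes "tournament_solution f"
    and "ts_condorcet f"
  shows "approval_monotonic f \<longleftrightarrow> ts_exclusive_monotonic f \<and> ts_enm f"
proof
  assume em: "ts_exclusive_monotonic f \<and> ts_enm f"
  show "approval_monotonic f"
    unfolding approval_monotonic_def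
  proof (intro allI impI)
    fix C Ts Ts' c
    assume e: "election C Ts" "election C Ts'" "length Ts = length Ts'"
      and w: "c \<in> approval_winners f C Ts"
      and imp: "\<forall>i<length Ts. c_improvement C c (Ts ! i) (Ts' ! i)"
    have "\<forall>d\<in>C. approval_score f C Ts' d \<le> approval_score f C Ts' c"
    proof
      fix d assume "d \<in> C"
      have "approval_score f C Ts' d + approval_score f C Ts c
           \<le> approval_score f C Ts d + approval_score f C Ts' c"
        by (rule score_ineq[OF e(3) imp]) (rule pointwise[OF conjunct1[OF em] conjunct2[OF em]])
      moreover have "approval_score f C Ts d \<le> approval_score f C Ts c"
        using w \<open>d \<in> C\<close> unfolding approval_winners_def by blast
      ultimately show "approval_score f C Ts' d \<le> approval_score f C Ts' c" by linarith
    qed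
    then show "c \<in> approval_winners f C Ts'" using w unfolding approval_winners_def by blast
  qed
next
  assume am: "approval_monotonic f"
  have ts: "f C R \<noteq> {} \<and> f C R \<subseteq> C" if "tournament C R" for C R
    using assms(1) that unfolding tournament_solution_def by blast
  have cond: "f C (src_tour d C R) = {d}" if "tournament C R" "d \<in> C" for C R d
    using assms(2) src_tour[OF that] unfolding ts_condorcet_def by blast
  have el: "election C Ts" if "tournament C R" "\<forall>T\<in>set Ts. tournament C T" for C R Ts
    using that unfolding election_def tournament_def by blast
  have part1: "c \<in> f C R'" if imp: "c_improvement C c R R'" and cR: "c \<in> f C R" for C c R R'
  proof (rule ccontr)
    assume nc: "c \<notin> f C R'"
    have tR: "tournament C R" "tournament C R'" and cC: "c \<in> C"
      using imp unfolding c_improvement_def by auto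
    have "c \<in> approval_winners f C [R]"
      using cR cC unfolding approval_winners_def approval_score_def by auto
    moreover have "election C [R]" "election C [R']" using el[OF tR(1)] tR by auto
    moreover have "\<forall>i<length [R]. c_improvement C c ([R] ! i) ([R'] ! i)" using imp by simp
    ultimately have "c \<in> approval_winners f C [R']"
      using am_use[OF am] by (metis length_Cons)
    moreover obtain d where "d \<in> f C R'" using ts[OF tR(2)] by blast
    moreover have "d \<in> C" using ts[OF tR(2)] calculation(2) by blast
    ultimately show False using nc
      unfolding approval_winners_def approval_score_def by fastforce
  qed
  show "ts_exclusive_monotonic f \<and> ts_enm f"
  proof
    show "ts_exclusive_monotonic f"
      unfolding ts_exclusive_monotonic_def
    proof (intro allI impI conjI)
      fix C c R R'
      assume imp: "c_improvement C c R R'" and cR: "c \<in> f C R"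
      show cR': "c \<in> f C R'" by (rule part1[OF imp cR])
      show "f C R' \<subseteq> f C R"
      proof
        fix d assume dR': "d \<in> f C R'"
        show "d \<in> f C R"
        proof (rule ccontr)
          assume dR: "d \<notin> f C R"
          have tR: "tournament C R" "tournament C R'" and cC: "c \<in> C"
            using imp unfolding c_improvement_def by auto
          have dC: "d \<in> C" using ts[OF tR(2)] dR' by blast
          have dc: "d \<noteq> c" using dR cR by blast
          define S where "S = src_tour d C R"
          have tS: "tournament C S" using src_tour[OF tR(1) dC] S_def by simp
          have fS: "f C S = {d}" using cond[OF tR(1) dC] S_def by simp
          have e1: "election C [R, S]" using el[OF tR(1)] tR tS by simp
          have e2: "election C [R', S]" using el[OF tR(1)] tR tS by simp
          have sub: "f C R \<subseteq> C" using ts[OF tR(1)] by blast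
          have "c \<in> approval_winners f C [R, S]"
            unfolding approval_winners_def
          proof (intro CollectI conjI cC ballI)
            fix e assume "e \<in> C"
            show "approval_score f C [R, S] e \<le> approval_score f C [R, S] c"
              using cR dR dc fS by (cases "e = d") (simp_all add: sc_cons)
          qed
          moreover have "\<forall>i<length [R, S]. c_improvement C c ([R, S] ! i) ([R', S] ! i)"
          proof (intro allI impI)
            fix i assume "i < length [R, S]"
            then have "i = 0 \<or> i = 1" by auto
            then show "c_improvement C c ([R, S] ! i) ([R', S] ! i)"
              using imp self_imp[OF tS cC] by auto
          qed
          ultimately have "c \<in> approval_winners f C [R', S]"
            using am_use[OF am e1 e2] by simp
          then have "approval_score f C [R', S] d \<le> approval_score f C [R', S] c"
            using dC unfolding approval_winners_def by blast
          then show False using dR' cR' fS dc by (simp add: sc_cons)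
        qed
      qed
    qed
    show "ts_enm f"
      unfolding ts_enm_def
    proof (intro allI impI)
      fix C c R R'
      assume imp: "c_improvement C c R R'" and ncR: "c \<notin> f C R"
        and ns: "\<not> f C R' \<subseteq> f C R"
      show "c \<in> f C R'"
      proof (rule ccontr)
        assume ncR': "c \<notin> f C R'"
        obtain d where dR': "d \<in> f C R'" and dR: "d \<notin> f C R" using ns by blast
        have tR: "tournament C R" "tournament C R'" and cC: "c \<in> C"
          using imp unfolding c_improvement_def by auto
        have dC: "d \<in> C" using ts[OF tR(2)] dR' by blast
        have dc: "d \<noteq> c" using dR' ncR' by blast
        define Sc where "Sc = src_tour c C R"
        define Sd where "Sd = src_tour d C R"
        have tSc: "tournament C Sc" using src_tour[OF tR(1) cC] Sc_def by simp
        have tSd: "tournament C Sd" using src_tour[OF tR(1) dC] Sd_def by simp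
        have fSc: "f C Sc = {c}" using cond[OF tR(1) cC] Sc_def by simp
        have fSd: "f C Sd = {d}" using cond[OF tR(1) dC] Sd_def by simp
        have e1: "election C [R, Sc, Sd]" using el[OF tR(1)] tR tSc tSd by simp
        have e2: "election C [R', Sc, Sd]" using el[OF tR(1)] tR tSc tSd by simp
        have "c \<in> approval_winners f C [R, Sc, Sd]"
          unfolding approval_winners_def
        proof (intro CollectI conjI cC ballI)
          fix e assume "e \<in> C"
          show "approval_score f C [R, Sc, Sd] e \<le> approval_score f C [R, Sc, Sd] c"
            using ncR dR dc fSc fSd by (cases "e = c"; cases "e = d") (simp_all add: sc_cons)
        qed
        moreover have "\<forall>i<length [R, Sc, Sd]. c_improvement C c ([R, Sc, Sd] ! i) ([R', Sc, Sd] ! i)"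
        proof (intro allI impI)
          fix i assume "i < length [R, Sc, Sd]"
          then have "i = 0 \<or> i = 1 \<or> i = 2" by auto
          then show "c_improvement C c ([R, Sc, Sd] ! i) ([R', Sc, Sd] ! i)"
            using imp self_imp[OF tSc cC] self_imp[OF tSd cC] by auto
        qed
        ultimately have "c \<in> approval_winners f C [R', Sc, Sd]"
          using am_use[OF am e1 e2] by simp
        then have "approval_score f C [R', Sc, Sd] d \<le> approval_score f C [R', Sc, Sd] c"
          using dC unfolding approval_winners_def by blast
        then show False using dR' ncR' fSc fSd dc by (simp add: sc_cons)
      qed
    qed
  qed
qed

end
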